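(* Let $(\mathcal{C},\psi)$ be a t-pair. Then for every $b\in\{i,d,a\}$, $\operatorname{typ}(\mathcal{U}^{bi}_{\mathcal{C}\psi})\preceq\operatorname{typ}(\mathcal{U}^{bd}_{\mathcal{C}\psi})\preceq\operatorname{typ}(\mathcal{U}^{ba}_{\mathcal{C}\psi})$ and $\operatorname{typ}(\mathcal{U}^{ab}_{\mathcal{C}\psi})\preceq\operatorname{typ}(\mathcal{U}^{db}_{\mathcal{C}\psi})\preceq\operatorname{typ}(\mathcal{U}^{ib}_{\mathcal{C}\psi})$.
   Context: Let $\mathbb{N}=\{0,1,2,\dots\}$; for an integer $k\ge 2$ let $E_k=\{0,1,\dots,k-1\}$; let $\mathcal{P}(\mathbb{N})$ be the set of nonempty finite subsets of $\mathbb{N}$. Let $F$ be a nonempty set (of attribute names). A decision table $T\in\mathcal{M}_k(F)$ is a rectangular table with $n\ge 1$ columns labeled with attributes $f_1,\dots,f_n\in F$ (any two columns labeled with the same attribute are equal), whose rows are pairwise different tuples from $E_k^n$ (the set of rows may be empty), each row being labeled with a set of decisions from $\mathcal{P}(\mathbb{N})$. Write $At(T)=\{f_1,\dots,f_n\}$ and $\Delta(T)$ for the set of rows. For a word $\alpha=(f_{i_1},\delta_1)\cdots(f_{i_m},\delta_m)$ with $f_{i_j}\in At(T)$, $\delta_j\in E_k$, the subtable $T\alpha$ consists of the rows of $T$ having value $\delta_j$ in column $f_{i_j}$ for all $j$ ($T\lambda=T$ for the empty word $\lambda$). Operations on tables: (1) removal of a column from a table with at least two columns (if groups of equal rows appear,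 only the first row of each group, with its decision set, is kept); (2) changing of decisions: the decision sets attached to rows are replaced arbitrarily by sets from $\mathcal{P}(\mathbb{N})$; (3) permutation of columns: swap two columns together with their attribute labels; (4) duplication of columns: add a copy of a column (with its label) next to it. A set $\mathcal{C}\subseteq\mathcal{M}_k(F)$ is a closed class if every table obtained from a table of $\mathcal{C}$ by finitely many such operations belongs to $\mathcal{C}$. A decision tree over $\mathcal{M}_k(F)$ is a finite directed tree with a root (unique node with no entering edge) and at least two nodes such that the root and the edges leaving the root are unlabeled, each worker node (neither root nor terminal) is labeled with an attribute from $F$, each edge leaving a worker node is labeled with a number from $E_k$, and each terminal node is labeled with a number from $\mathbb{N}$. For a complete path $\xi$ (root to terminal node) whose worker nodes are labeled $f_{j_1},\dots,f_{j_m}$ in order, with the edges leaving them labeled $\delta_1,\dots,\delta_m$, put $\pi(\xi)=(f_{j_1},\delta_1)\cdots(f_{j_m},\delta_m)$, $\varphi(\xi)=f_{j_1}\cdots f_{j_m}$ (both empty if $m=0$), and let $\tau(\xi)$ be the label of its terminal node. A nondeterministic decision tree for $T$ is a decision tree $\Gamma$ whose worker-node attributes lie in $At(T)$, such that $\bigcup_{\xi}\Delta(T\pi(\xi))=\Delta(T)$ (union over complete paths), and for every row $r\in\Delta(T)$ and every complete path $\xi$ with $r\in\Delta(T\pi(\xi))$, $\tau(\xi)$ belongs to the decision set of $r$. A decision tree is deterministic if exactly one edge leaves the root and the edges leaving each worker node have pairwise different labels; a deterministic decision tree for $T$ is a deterministic decision tree that is a nondeterministic decision tree for $T$. A complexity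 measure over $\mathcal{M}_k(F)$ is any map $\psi:F^*\to\mathbb{N}$, where $F^*$ is the set of finite words over $F$ including the empty word $\lambda$. For a tree, $\psi(\Gamma)=\max_\xi\psi(\varphi(\xi))$ over complete paths. For $T$ with columns labeled $f_1,\dots,f_n$: $\psi^i(T)=\psi(f_1\cdots f_n)$, $\psi^d(T)$ is the minimum complexity of a deterministic decision tree for $T$, $\psi^a(T)$ the minimum complexity of a nondeterministic decision tree for $T$. A t-pair $(\mathcal{C},\psi)$ consists of a closed class $\mathcal{C}\subseteq\mathcal{M}_k(F)$ and a complexity measure $\psi$ over $\mathcal{M}_k(F)$. For $b,c\in\{i,d,a\}$ define the partial function $\mathcal{U}^{bc}_{\mathcal{C}\psi}(n)=\max\{\psi^b(T):T\in\mathcal{C},\psi^c(T)\le n\}$ (defined iff this set is nonempty and finite). For a partial function $g:\mathbb{N}\to\mathbb{N}$ with domain $\mathrm{Dom}(g)$, let $\mathrm{Dom}^+(g)=\{n\in\mathrm{Dom}(g):g(n)\ge n\}$, $\mathrm{Dom}^-(g)=\{n\in\mathrm{Dom}(g):g(n)\le n\}$. Its type $\operatorname{typ}(g)$ is: $\alpha$ if $\mathrm{Dom}(g)$ is infinite and $g$ is bounded above; $\beta$ if $\mathrm{Dom}(g)$ is infinite, $\mathrm{Dom}^+(g)$ is finite and $g$ is unbounded above; $\gamma$ if $\mathrm{Dom}^+(g)$ and $\mathrm{Dom}^-(g)$ are both infinite; $\delta$ if $\mathrm{Dom}(g)$ is infinite and $\mathrm{Dom}^-(g)$ is finite; $\epsilon$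 if $\mathrm{Dom}(g)$ is finite. $\preceq$ is the linear order $\alpha\preceq\beta\preceq\gamma\preceq\delta\preceq\epsilon$. *)

theory Defs
  imports Main
begin

text \<open>A decision table over attribute names of type 'f: a list of column attributes
  f_1..f_n and an (ordered) list of rows; each row is a tuple (list of length n)
  together with its decision set.\<close>

type_synonym 'f dtable = "'f list \<times> (nat list \<times> nat set) list"

definition atts :: "'f dtable \<Rightarrow> 'f list" where "atts T = fst T"
definition rows :: "'f dtable \<Rightarrow> (nat list \<times> nat set) list" where "rows T = snd T"

definition table_in :: "nat \<Rightarrow> 'f dtable \<Rightarrow> bool" where
  "table_in k T \<longleftrightarrow>
     atts T \<noteq> [] \<and>
     (\<forall>(r, D) \<in> set (rows T). length r = length (atts T) \<and> (\<forall>v \<in> set r. v < k)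
         \<and> finite D \<and> D \<noteq> {}) \<and>
     distinct (map fst (rows T)) \<and>
     (\<forall>i < length (atts T). \<forall>j < length (atts T). atts T ! i = atts T ! j \<longrightarrow>
         (\<forall>(r, D) \<in> set (rows T). r ! i = r ! j))"

definition sub_rows :: "'f dtable \<Rightarrow> ('f \<times> nat) list \<Rightarrow> nat list set" where
  "sub_rows T \<alpha> = {r \<in> set (map fst (rows T)).
      \<forall>(f, \<delta>) \<in> set \<alpha>. \<forall>i < length (atts T). atts T ! i = f \<longrightarrow> r ! i = \<delta>}"

definition del_at :: "nat \<Rightarrow> 'a list \<Rightarrow> 'a list" where
  "del_at i xs = take i xs @ drop (Suc i) xs"

definition dup_at :: "nat \<Rightarrow> 'a list \<Rightarrow> 'a list" where
  "dup_at i xs = take (Suc i) xs @ [xs ! i] @ drop (Suc i) xs"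

definition swap_at :: "nat \<Rightarrow> nat \<Rightarrow> 'a list \<Rightarrow> 'a list" where
  "swap_at i j xs = xs[i := xs ! j, j := xs ! i]"

definition keep_first :: "('a \<times> 'b) list \<Rightarrow> ('a \<times> 'b) list" where
  "keep_first xs = map (nth xs)
     (filter (\<lambda>i. \<forall>j < i. fst (xs ! j) \<noteq> fst (xs ! i)) [0..<length xs])"

definition remove_col :: "nat \<Rightarrow> 'f dtable \<Rightarrow> 'f dtable" where
  "remove_col i T = (del_at i (atts T), keep_first (map (\<lambda>(r, D). (del_at i r, D)) (rows T)))"

definition swap_cols :: "nat \<Rightarrow> nat \<Rightarrow> 'f dtable \<Rightarrow> 'f dtable" where
  "swap_cols i j T = (swap_at i j (atts T), map (\<lambda>(r, D). (swap_at i j r, D)) (rows T))"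

definition dup_col :: "nat \<Rightarrow> 'f dtable \<Rightarrow> 'f dtable" where
  "dup_col i T = (dup_at i (atts T), map (\<lambda>(r, D). (dup_at i r, D)) (rows T))"

definition change_decisions :: "'f dtable \<Rightarrow> 'f dtable \<Rightarrow> bool" where
  "change_decisions T T' \<longleftrightarrow> atts T' = atts T \<and> map fst (rows T') = map fst (rows T) \<and>
      (\<forall>(r, D) \<in> set (rows T'). finite D \<and> D \<noteq> {})"

definition table_op :: "'f dtable \<Rightarrow> 'f dtable \<Rightarrow> bool" where
  "table_op T T' \<longleftrightarrow>
     (\<exists>i < length (atts T). length (atts T) \<ge> 2 \<and> T' = remove_col i T) \<or>
     change_decisions T T' \<or>
     (\<exists>i < length (atts T). \<exists>j < length (atts T). T' = swap_cols i j T) \<or>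
     (\<exists>i < length (atts T). T' = dup_col i T)"

definition closed_class :: "nat \<Rightarrow> 'f dtable set \<Rightarrow> bool" where
  "closed_class k C \<longleftrightarrow> (\<forall>T \<in> C. table_in k T) \<and>
     (\<forall>T \<in> C. \<forall>T'. table_op\<^sup>*\<^sup>* T T' \<longrightarrow> T' \<in> C)"

text \<open>A decision tree is given by the (nonempty) list of children of its unlabelled root.\<close>

datatype 'f dnode = Term nat | Work 'f "(nat \<times> 'f dnode) list"

type_synonym 'f dtree = "'f dnode list"

inductive wf_node :: "nat \<Rightarrow> 'f set \<Rightarrow> 'f dnode \<Rightarrow> bool" for k :: nat and At :: "'f set" where
  "wf_node k At (Term d)"
| "f \<in> At \<Longrightarrow> cs \<noteq> [] \<Longrightarrow> (\<And>\<delta> c. (\<delta>, c) \<in> set cs \<Longrightarrow> \<delta> < k \<and> wf_node k At c)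
     \<Longrightarrow> wf_node k At (Work f cs)"

inductive det_node :: "'f dnode \<Rightarrow> bool" where
  "det_node (Term d)"
| "distinct (map fst cs) \<Longrightarrow> (\<And>\<delta> c. (\<delta>, c) \<in> set cs \<Longrightarrow> det_node c)
     \<Longrightarrow> det_node (Work f cs)"

inductive node_path :: "'f dnode \<Rightarrow> ('f \<times> nat) list \<Rightarrow> nat \<Rightarrow> bool" where
  "node_path (Term d) [] d"
| "(\<delta>, c) \<in> set cs \<Longrightarrow> node_path c p d \<Longrightarrow> node_path (Work f cs) ((f, \<delta>) # p) d"

text \<open>Complete paths of a tree, represented by (pi(xi), tau(xi)).\<close>
definition tree_path :: "'f dtree \<Rightarrow> ('f \<times> nat) list \<Rightarrow> nat \<Rightarrow> bool" where
  "tree_path \<Gamma> p d \<longleftrightarrow> (\<exists>c \<in> set \<Gamma>. node_path c p d)"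

definition ndtree_for :: "nat \<Rightarrow> 'f dtable \<Rightarrow> 'f dtree \<Rightarrow> bool" where
  "ndtree_for k T \<Gamma> \<longleftrightarrow>
     \<Gamma> \<noteq> [] \<and> (\<forall>c \<in> set \<Gamma>. wf_node k (set (atts T)) c) \<and>
     (\<Union>{sub_rows T p | p d. tree_path \<Gamma> p d}) = set (map fst (rows T)) \<and>
     (\<forall>(r, D) \<in> set (rows T). \<forall>p d. tree_path \<Gamma> p d \<and> r \<in> sub_rows T p \<longrightarrow> d \<in> D)"

definition dtree_for :: "nat \<Rightarrow> 'f dtable \<Rightarrow> 'f dtree \<Rightarrow> bool" where
  "dtree_for k T \<Gamma> \<longleftrightarrow> ndtree_for k T \<Gamma> \<and> length \<Gamma> = 1 \<and> (\<forall>c \<in> set \<Gamma>. det_node c)"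

definition tree_cplx :: "('f list \<Rightarrow> nat) \<Rightarrow> 'f dtree \<Rightarrow> nat" where
  "tree_cplx \<psi> \<Gamma> = Max {\<psi> (map fst p) | p d. tree_path \<Gamma> p d}"

datatype cmode = CI | CD | CA

definition psi_of :: "nat \<Rightarrow> ('f list \<Rightarrow> nat) \<Rightarrow> cmode \<Rightarrow> 'f dtable \<Rightarrow> nat" where
  "psi_of k \<psi> m T = (case m of
      CI \<Rightarrow> \<psi> (atts T)
    | CD \<Rightarrow> (LEAST n. \<exists>\<Gamma>. dtree_for k T \<Gamma> \<and> tree_cplx \<psi> \<Gamma> = n)
    | CA \<Rightarrow> (LEAST n. \<exists>\<Gamma>. ndtree_for k T \<Gamma> \<and> tree_cplx \<psi> \<Gamma> = n))"

text \<open>The partial function U^{bc}_{C psi}, as nat => nat option (None = undefined).\<close>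
definition U_fun :: "nat \<Rightarrow> 'f dtable set \<Rightarrow> ('f list \<Rightarrow> nat) \<Rightarrow> cmode \<Rightarrow> cmode \<Rightarrow> nat \<Rightarrow> nat option" where
  "U_fun k C \<psi> b c n =
     (let S = {psi_of k \<psi> b T | T. T \<in> C \<and> psi_of k \<psi> c T \<le> n}
      in if S \<noteq> {} \<and> finite S then Some (Max S) else None)"

definition pdom :: "(nat \<Rightarrow> nat option) \<Rightarrow> nat set" where
  "pdom g = {n. g n \<noteq> None}"
definition pdom_plus :: "(nat \<Rightarrow> nat option) \<Rightarrow> nat set" where
  "pdom_plus g = {n \<in> pdom g. the (g n) \<ge> n}"
definition pdom_minus :: "(nat \<Rightarrow> nat option) \<Rightarrow> nat set" where
  "pdom_minus g = {n \<in> pdom g. the (g n) \<le> n}"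
definition bounded_above :: "(nat \<Rightarrow> nat option) \<Rightarrow> bool" where
  "bounded_above g \<longleftrightarrow> (\<exists>M. \<forall>n \<in> pdom g. the (g n) \<le> M)"

datatype ftype = TAlpha | TBeta | TGamma | TDelta | TEps

definition has_type :: "(nat \<Rightarrow> nat option) \<Rightarrow> ftype \<Rightarrow> bool" where
  "has_type g t = (case t of
      TAlpha \<Rightarrow> infinite (pdom g) \<and> bounded_above g
    | TBeta \<Rightarrow> infinite (pdom g) \<and> finite (pdom_plus g) \<and> \<not> bounded_above g
    | TGamma \<Rightarrow> infinite (pdom_plus g) \<and> infinite (pdom_minus g)
    | TDelta \<Rightarrow> infinite (pdom g) \<and> finite (pdom_minus g)
    | TEps \<Rightarrow> finite (pdom g))"

definition ftyp :: "(nat \<Rightarrow> nat option) \<Rightarrow> ftype" where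
  "ftyp g = (THE t. has_type g t)"

fun ftype_rank :: "ftype \<Rightarrow> nat" where
  "ftype_rank TAlpha = 0" | "ftype_rank TBeta = 1" | "ftype_rank TGamma = 2"
| "ftype_rank TDelta = 3" | "ftype_rank TEps = 4"

definition ftype_le :: "ftype \<Rightarrow> ftype \<Rightarrow> bool" (infix "\<preceq>\<^sub>t" 50) where
  "t1 \<preceq>\<^sub>t t2 \<longleftrightarrow> ftype_rank t1 \<le> ftype_rank t2"

end

theory Submission
  imports Defs
begin

definition GU :: "'a set \<Rightarrow> ('a \<Rightarrow> nat) \<Rightarrow> ('a \<Rightarrow> nat) \<Rightarrow> nat \<Rightarrow> nat option" where
  "GU I B Cc n = (let S = B ` {T \<in> I. Cc T \<le> n}
      in if S \<noteq> {} \<and> finite S then Some (Max S) else None)"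

lemma U_fun_GU: "U_fun k C \<psi> b c = GU C (psi_of k \<psi> b) (psi_of k \<psi> c)"
proof (rule ext)
  fix n
  have "{psi_of k \<psi> b T | T. T \<in> C \<and> psi_of k \<psi> c T \<le> n}
        = psi_of k \<psi> b ` {T \<in> C. psi_of k \<psi> c T \<le> n}" by blast
  then show "U_fun k C \<psi> b c n = GU C (psi_of k \<psi> b) (psi_of k \<psi> c) n"
    unfolding U_fun_def GU_def by simp
qed

lemma pdom_GU: "n \<in> pdom (GU I B Cc) \<longleftrightarrow>
   B ` {T \<in> I. Cc T \<le> n} \<noteq> {} \<and> finite (B ` {T \<in> I. Cc T \<le> n})"
  unfolding pdom_def GU_def Let_def by auto

lemma the_GU: "n \<in> pdom (GU I B Cc) \<Longrightarrow> the (GU I B Cc n) = Max (B ` {T \<in> I. Cc T \<le> n})"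
  unfolding pdom_def GU_def Let_def by (auto split: if_splits)

lemma pdom_split: "pdom g = pdom_plus g \<union> pdom_minus g"
  unfolding pdom_plus_def pdom_minus_def by auto

lemma type_exists: "\<exists>t. has_type g t"
proof (cases "finite (pdom g)")
  case True then show ?thesis by (intro exI[of _ TEps]) (simp add: has_type_def)
next
  case inf: False
  show ?thesis
  proof (cases "finite (pdom_plus g)")
    case True
    then show ?thesis using inf
      by (cases "bounded_above g") (auto simp: has_type_def intro: exI[of _ TAlpha] exI[of _ TBeta])
  next
    case False
    then show ?thesis using inf
      by (cases "finite (pdom_minus g)") (auto simp: has_type_def intro: exI[of _ TGamma] exI[of _ TDelta])
  qed
qed

lemma bounded_plus_finite: "bounded_above g \<Longrightarrow> finite (pdom_plus g)"
proof -
  assume "bounded_above g"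
  then obtain M where M: "\<forall>n \<in> pdom g. the (g n) \<le> M" unfolding bounded_above_def by blast
  have "pdom_plus g \<subseteq> {..M}" using M unfolding pdom_plus_def by force
  then show ?thesis using finite_subset by blast
qed

lemma bounded_minus_infinite: "bounded_above g \<Longrightarrow> infinite (pdom g) \<Longrightarrow> infinite (pdom_minus g)"
  using bounded_plus_finite pdom_split by (metis finite_UnI)

lemma type_unique: "has_type g t1 \<Longrightarrow> has_type g t2 \<Longrightarrow> t1 = t2"
proof -
  have a: "bounded_above g \<Longrightarrow> finite (pdom_plus g)" by (rule bounded_plus_finite)
  have b: "bounded_above g \<Longrightarrow> infinite (pdom g) \<Longrightarrow> infinite (pdom_minus g)" by (rule bounded_minus_infinite)
  have c: "finite (pdom g) \<Longrightarrow> finite (pdom_plus g)" "finite (pdom g) \<Longrightarrow> finite (pdom_minus g)"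
    using pdom_split[of g] by (metis finite_Un)+
  have d: "finite (pdom_plus g) \<Longrightarrow> finite (pdom_minus g) \<Longrightarrow> finite (pdom g)"
    using pdom_split[of g] by simp
  show "has_type g t1 \<Longrightarrow> has_type g t2 \<Longrightarrow> t1 = t2"
    unfolding has_type_def
    by (cases t1; cases t2; simp; use a b c d in blast)
qed

lemma ftyp_has: "has_type g (ftyp g)"
  unfolding ftyp_def using type_exists[of g] type_unique[of g]
  by (metis theI)

lemma ftyp_eq: "has_type g t \<Longrightarrow> ftyp g = t"
  using ftyp_has type_unique by blast

lemma rank_le4: "ftype_rank t \<le> 4" by (cases t) auto

lemma rank_mono:
  assumes H: "infinite (pdom g2) \<Longrightarrow> pdom g1 \<subseteq> pdom g2 \<and> finite (pdom g2 - pdom g1)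
              \<and> (\<forall>n\<in>pdom g1. the (g1 n) \<le> the (g2 n))"
  shows "ftyp g1 \<preceq>\<^sub>t ftyp g2"
proof (cases "finite (pdom g2)")
  case True
  then have "ftyp g2 = TEps" by (intro ftyp_eq) (simp add: has_type_def)
  then show ?thesis unfolding ftype_le_def using rank_le4 by simp
next
  case inf: False
  from H inf have sub: "pdom g1 \<subseteq> pdom g2" and fd: "finite (pdom g2 - pdom g1)"
    and le: "\<forall>n\<in>pdom g1. the (g1 n) \<le> the (g2 n)" by auto
  have F1: "infinite (pdom g1)"
  proof
    assume "finite (pdom g1)"
    then have "finite (pdom g1 \<union> (pdom g2 - pdom g1))" using fd by blast
    then show False using inf by (metis Un_Diff_cancel finite_Un)
  qed
  have F2: "pdom_plus g1 \<subseteq> pdom_plus g2"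
    using sub le unfolding pdom_plus_def by force
  have F3: "pdom_minus g2 - (pdom g2 - pdom g1) \<subseteq> pdom_minus g1"
    using le unfolding pdom_minus_def by force
  have F3': "infinite (pdom_minus g2) \<Longrightarrow> infinite (pdom_minus g1)"
  proof
    assume a: "infinite (pdom_minus g2)" "finite (pdom_minus g1)"
    then have "finite (pdom_minus g2 - (pdom g2 - pdom g1))" using F3 finite_subset by blast
    then have "finite (pdom_minus g2)" using fd
      by (metis Diff_partition Un_Diff_cancel2 finite_Un sup.cobounded2)
    then show False using a by blast
  qed
  have F4: "bounded_above g2 \<Longrightarrow> bounded_above g1"
    using sub le unfolding bounded_above_def by (meson le_trans subsetD)
  have h1: "has_type g1 (ftyp g1)" and h2: "has_type g2 (ftyp g2)" using ftyp_has by auto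
  show ?thesis
  proof (cases "ftyp g2")
    case TAlpha
    then have "has_type g1 TAlpha" using h2 F1 F4 by (simp add: has_type_def)
    then show ?thesis using TAlpha ftyp_eq by (simp add: ftype_le_def)
  next
    case TBeta
    then have "infinite (pdom_minus g2)" using h2 pdom_split[of g2]
      by (auto simp add: has_type_def)
    then have "infinite (pdom_minus g1)" using F3' by blast
    moreover have "finite (pdom_plus g1)" using TBeta h2 F2 by (simp add: has_type_def finite_subset)
    ultimately show ?thesis using TBeta h1 F1 by (cases "ftyp g1") (auto simp: ftype_le_def has_type_def)
  next
    case TGamma
    then have "infinite (pdom_minus g1)" using F3' h2 by (simp add: has_type_def)
    then show ?thesis using TGamma h1 F1 by (cases "ftyp g1") (auto simp: ftype_le_def has_type_def)
  next
    case TDelta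
    then show ?thesis using h1 F1 by (cases "ftyp g1") (auto simp: ftype_le_def has_type_def)
  next
    case TEps
    then show ?thesis using rank_le4 by (simp add: ftype_le_def)
  qed
qed

lemma infinite_ge: "infinite (A::nat set) \<Longrightarrow> \<exists>m\<in>A. n \<le> m"
  using finite_nat_set_iff_bounded_le[of A] by (meson nat_le_linear)

lemma GU_c:
  assumes cle: "\<forall>T\<in>I. Cs T \<le> Cb T"
  shows "ftyp (GU I B Cb) \<preceq>\<^sub>t ftyp (GU I B Cs)"
proof (rule rank_mono)
  assume inf: "infinite (pdom (GU I B Cs))"
  let ?Sb = "\<lambda>n. B ` {T \<in> I. Cb T \<le> n}" and ?Ss = "\<lambda>n. B ` {T \<in> I. Cs T \<le> n}"
  have sbs: "?Sb n \<subseteq> ?Ss n" for n using cle by force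
  have mono_s: "n \<le> m \<Longrightarrow> ?Ss n \<subseteq> ?Ss m" for n m by force
  have sub: "pdom (GU I B Cb) \<subseteq> pdom (GU I B Cs)"
  proof
    fix n assume n: "n \<in> pdom (GU I B Cb)"
    obtain m where m: "m \<in> pdom (GU I B Cs)" "n \<le> m" using infinite_ge[OF inf] by blast
    have fm: "finite (?Ss m)" using m(1) unfolding pdom_GU by blast
    have "finite (?Ss n)" using finite_subset[OF mono_s[OF m(2)] fm] .
    moreover have "?Sb n \<noteq> {}" using n unfolding pdom_GU by blast
    then have "?Ss n \<noteq> {}" using sbs[of n] by blast
    ultimately show "n \<in> pdom (GU I B Cs)" using pdom_GU by blast
  qed
  have "pdom (GU I B Cs) \<noteq> {}" using inf by auto
  then obtain m0 where "m0 \<in> pdom (GU I B Cs)" by blast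
  then obtain T0 where T0: "T0 \<in> I" unfolding pdom_GU by blast
  have "pdom (GU I B Cs) - pdom (GU I B Cb) \<subseteq> {..<Cb T0}"
  proof
    fix n assume n: "n \<in> pdom (GU I B Cs) - pdom (GU I B Cb)"
    show "n \<in> {..<Cb T0}"
    proof (rule ccontr)
      assume "n \<notin> {..<Cb T0}"
      then have "?Sb n \<noteq> {}" using T0 by force
      moreover have "finite (?Ss n)" using n pdom_GU[of n I B Cs] by blast
      then have "finite (?Sb n)" using finite_subset[OF sbs] by blast
      ultimately show False using n pdom_GU by blast
    qed
  qed
  then have fd: "finite (pdom (GU I B Cs) - pdom (GU I B Cb))" using finite_subset by blast
  have "\<forall>n\<in>pdom (GU I B Cb). the (GU I B Cb n) \<le> the (GU I B Cs n)"
  proof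
    fix n assume n: "n \<in> pdom (GU I B Cb)"
    then have n2: "n \<in> pdom (GU I B Cs)" using sub by blast
    show "the (GU I B Cb n) \<le> the (GU I B Cs n)"
      unfolding the_GU[OF n] the_GU[OF n2]
      using Max_mono[OF sbs] n n2 unfolding pdom_GU by blast
  qed
  then show "pdom (GU I B Cb) \<subseteq> pdom (GU I B Cs) \<and> finite (pdom (GU I B Cs) - pdom (GU I B Cb))
       \<and> (\<forall>n\<in>pdom (GU I B Cb). the (GU I B Cb n) \<le> the (GU I B Cs n))" using sub fd by blast
qed

lemma GU_b:
  assumes ble: "\<forall>T\<in>I. B1 T \<le> B2 T"
  shows "ftyp (GU I B1 Cc) \<preceq>\<^sub>t ftyp (GU I B2 Cc)"
proof (rule rank_mono)
  assume inf: "infinite (pdom (GU I B2 Cc))"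
  let ?J = "\<lambda>n. {T \<in> I. Cc T \<le> n}"
  have fin12: "finite (B2 ` ?J n) \<Longrightarrow> finite (B1 ` ?J n)" for n
  proof -
    assume f: "finite (B2 ` ?J n)"
    have "B1 ` ?J n \<subseteq> {..Max (B2 ` ?J n)}"
    proof
      fix x assume "x \<in> B1 ` ?J n"
      then obtain T where T: "T \<in> ?J n" "x = B1 T" by blast
      have "B2 T \<le> Max (B2 ` ?J n)" using f T by (intro Max_ge) auto
      moreover have "B1 T \<le> B2 T" using ble T(1) by blast
      ultimately show "x \<in> {..Max (B2 ` ?J n)}" using T(2) by simp
    qed
    then show ?thesis using finite_subset by blast
  qed
  have sub: "pdom (GU I B1 Cc) \<subseteq> pdom (GU I B2 Cc)"
  proof
    fix n assume n: "n \<in> pdom (GU I B1 Cc)"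
    obtain m where m: "m \<in> pdom (GU I B2 Cc)" "n \<le> m" using infinite_ge[OF inf] by blast
    have "?J n \<subseteq> ?J m" using m(2) by auto
    then have "B2 ` ?J n \<subseteq> B2 ` ?J m" by (rule image_mono)
    moreover have "finite (B2 ` ?J m)" using m(1) unfolding pdom_GU by blast
    ultimately have "finite (B2 ` ?J n)" using finite_subset by blast
    moreover have "B2 ` ?J n \<noteq> {}" using n unfolding pdom_GU by blast
    ultimately show "n \<in> pdom (GU I B2 Cc)" unfolding pdom_GU by blast
  qed
  have sub2: "pdom (GU I B2 Cc) \<subseteq> pdom (GU I B1 Cc)"
  proof
    fix n assume "n \<in> pdom (GU I B2 Cc)"
    then have "finite (B2 ` ?J n)" "?J n \<noteq> {}" unfolding pdom_GU by auto
    then show "n \<in> pdom (GU I B1 Cc)" unfolding pdom_GU using fin12 by blast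
  qed
  have "pdom (GU I B2 Cc) - pdom (GU I B1 Cc) = {}" using sub2 by (rule Diff_eq_empty_iff[THEN iffD2])
  then have fd: "finite (pdom (GU I B2 Cc) - pdom (GU I B1 Cc))" by (simp only: finite.emptyI)
  have "\<forall>n\<in>pdom (GU I B1 Cc). the (GU I B1 Cc n) \<le> the (GU I B2 Cc n)"
  proof
    fix n assume n: "n \<in> pdom (GU I B1 Cc)"
    then have n2: "n \<in> pdom (GU I B2 Cc)" using sub by blast
    have f1: "finite (B1 ` ?J n)" "B1 ` ?J n \<noteq> {}" using n unfolding pdom_GU by blast+
    have f2: "finite (B2 ` ?J n)" using n2 unfolding pdom_GU by blast
    have "Max (B1 ` ?J n) \<le> Max (B2 ` ?J n)"
    proof (subst Max_le_iff[OF f1], intro ballI)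
      fix x assume "x \<in> B1 ` ?J n"
      then obtain T where T: "T \<in> ?J n" "x = B1 T" by blast
      have "B2 T \<le> Max (B2 ` ?J n)" using f2 T by (intro Max_ge) auto
      moreover have "B1 T \<le> B2 T" using ble T(1) by blast
      ultimately show "x \<le> Max (B2 ` ?J n)" using T(2) by linarith
    qed
    then show "the (GU I B1 Cc n) \<le> the (GU I B2 Cc n)"
      unfolding the_GU[OF n] the_GU[OF n2] .
  qed
  then show "pdom (GU I B1 Cc) \<subseteq> pdom (GU I B2 Cc) \<and> finite (pdom (GU I B2 Cc) - pdom (GU I B1 Cc))
       \<and> (\<forall>n\<in>pdom (GU I B1 Cc). the (GU I B1 Cc n) \<le> the (GU I B2 Cc n))" using sub fd by (intro conjI)
qed

fun full :: "nat \<Rightarrow> (nat list \<Rightarrow> nat) \<Rightarrow> 'f list \<Rightarrow> nat list \<Rightarrow> 'f dnode" where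
  "full k L [] v = Term (L v)"
| "full k L (f # fs) v = Work f (map (\<lambda>\<delta>. (\<delta>, full k L fs (v @ [\<delta>]))) [0..<k])"

lemma np_term: "node_path (Term d') p d \<longleftrightarrow> p = [] \<and> d = d'"
  by (auto elim: node_path.cases intro: node_path.intros)

lemma np_work: "node_path (Work f cs) p d \<longleftrightarrow>
   (\<exists>\<delta> c p'. (\<delta>, c) \<in> set cs \<and> node_path c p' d \<and> p = (f, \<delta>) # p')"
  by (rule iffI, cases rule: node_path.cases, auto intro: node_path.intros)

lemma full_path: "node_path (full k L fs v) p d \<longleftrightarrow>
   (\<exists>w. length w = length fs \<and> (\<forall>x\<in>set w. x < k) \<and> p = zip fs w \<and> d = L (v @ w))"
proof (induction fs arbitrary: v p)
  case Nil
  then show ?case by (simp add: np_term)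
next
  case (Cons f fs)
  show ?case
  proof
    assume "node_path (full k L (f # fs) v) p d"
    then obtain \<delta> p' where "\<delta> < k" "node_path (full k L fs (v @ [\<delta>])) p' d" "p = (f, \<delta>) # p'"
      by (auto simp: np_work)
    then obtain w' where "length w' = length fs" "\<forall>x\<in>set w'. x < k" "p' = zip fs w'" "d = L (v @ [\<delta>] @ w')"
      using Cons.IH by auto
    then show "\<exists>w. length w = length (f # fs) \<and> (\<forall>x\<in>set w. x < k) \<and> p = zip (f # fs) w \<and> d = L (v @ w)"
      using \<open>\<delta> < k\<close> \<open>p = (f, \<delta>) # p'\<close> by (intro exI[of _ "\<delta> # w'"]) auto
  next
    assume "\<exists>w. length w = length (f # fs) \<and> (\<forall>x\<in>set w. x < k) \<and> p = zip (f # fs) w \<and> d = L (v @ w)"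
    then obtain w where w: "length w = length (f # fs)" "\<forall>x\<in>set w. x < k" "p = zip (f # fs) w" "d = L (v @ w)"
      by blast
    then obtain \<delta> w' where ww: "w = \<delta> # w'" by (cases w) auto
    have "node_path (full k L fs (v @ [\<delta>])) (zip fs w') d"
      using Cons.IH w ww by auto
    then show "node_path (full k L (f # fs) v) p d"
      using w ww unfolding np_work full.simps set_map
      by (intro exI[of _ \<delta>] exI[of _ "full k L fs (v @ [\<delta>])"] exI[of _ "zip fs w'"]) auto
  qed
qed

lemma full_wf: "set fs \<subseteq> A \<Longrightarrow> k \<ge> 1 \<Longrightarrow> wf_node k A (full k L fs v)"
proof (induction fs arbitrary: v)
  case Nil then show ?case by (auto intro: wf_node.intros)
next
  case (Cons f fs)
  then show ?case by (auto intro!: wf_node.intros)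
qed

lemma full_det: "det_node (full k L fs v)"
proof (induction fs arbitrary: v)
  case Nil then show ?case by (auto intro: det_node.intros)
next
  case (Cons f fs)
  have "distinct (map fst (map (\<lambda>\<delta>. (\<delta>, full k L fs (v @ [\<delta>]))) [0..<k]))"
    by (simp add: comp_def)
  then show ?case using Cons by (auto intro!: det_node.intros)
qed

lemma full_tree:
  assumes T: "table_in k T" and k: "k \<ge> 1"
  shows "\<exists>\<Gamma>. dtree_for k T \<Gamma> \<and> tree_cplx \<psi> \<Gamma> = \<psi> (atts T)"
proof -
  define L where "L v = (case map_of (rows T) v of None \<Rightarrow> 0 | Some D \<Rightarrow> SOME x. x \<in> D)" for v
  define n where "n = length (atts T)"
  define \<Gamma> where "\<Gamma> = [full k L (atts T) []]"
  have tp: "tree_path \<Gamma> p d \<longleftrightarrow>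
     (\<exists>w. length w = n \<and> (\<forall>x\<in>set w. x < k) \<and> p = zip (atts T) w \<and> d = L w)" for p d
    unfolding tree_path_def \<Gamma>_def n_def by (simp add: full_path)
  have rowsT: "\<And>r D. (r, D) \<in> set (rows T) \<Longrightarrow> length r = n \<and> (\<forall>v\<in>set r. v < k) \<and> D \<noteq> {}"
    using T unfolding table_in_def n_def by fast
  have dist: "distinct (map fst (rows T))" using T unfolding table_in_def by blast
  have eqc: "\<And>i j r D. i < n \<Longrightarrow> j < n \<Longrightarrow> atts T ! i = atts T ! j \<Longrightarrow> (r, D) \<in> set (rows T) \<Longrightarrow> r ! i = r ! j"
    using T unfolding table_in_def n_def by fast
  have LD: "(r, D) \<in> set (rows T) \<Longrightarrow> L r \<in> D" for r D
  proof -
    assume rD: "(r, D) \<in> set (rows T)"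
    then have "map_of (rows T) r = Some D" using dist by (simp add: map_of_is_SomeI)
    then show "L r \<in> D" unfolding L_def using rowsT[OF rD] by (simp add: some_in_eq)
  qed
  have cov: "r \<in> sub_rows T (zip (atts T) r)" if rD: "(r, D) \<in> set (rows T)" for r D
  proof -
    have lr: "length r = n" using rowsT[OF rD] by blast
    have m: "r \<in> set (map fst (rows T))" using rD by force
    have P0: "r ! i = \<delta>" if x: "(f, \<delta>) \<in> set (zip (atts T) r)" and i: "i < length (atts T)"
        and eq: "atts T ! i = f" for f \<delta> i
    proof -
      obtain j where j: "j < n" "(f, \<delta>) = (atts T ! j, r ! j)" using x lr unfolding n_def
        by (auto simp: in_set_zip)
      have ai: "atts T ! i = atts T ! j" using eq j(2) by simp
      have "r ! i = r ! j" using eqc[OF _ j(1) ai rD] i unfolding n_def by blast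
      then show "r ! i = \<delta>" using j(2) by simp
    qed
    have P: "\<forall>(f, \<delta>)\<in>set (zip (atts T) r). \<forall>i<length (atts T). atts T ! i = f \<longrightarrow> r ! i = \<delta>"
      using P0 by blast
    show ?thesis unfolding sub_rows_def using m P by simp
  qed
  have bk: "r = w" if rD: "(r, D) \<in> set (rows T)" and w: "length w = n"
      and s: "r \<in> sub_rows T (zip (atts T) w)" for r D w
  proof -
    have lr: "length r = n" using rowsT[OF rD] by blast
    show ?thesis
    proof (rule nth_equalityI)
      show "length r = length w" using lr w by simp
    next
      fix i assume i: "i < length r"
      have "(atts T ! i, w ! i) \<in> set (zip (atts T) w)" using i lr w unfolding n_def
        by (auto simp: in_set_zip)
      then show "r ! i = w ! i" using s i lr unfolding sub_rows_def n_def by fastforce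
    qed
  qed
  have nd: "ndtree_for k T \<Gamma>"
    unfolding ndtree_for_def
  proof (intro conjI)
    show "\<Gamma> \<noteq> []" by (simp add: \<Gamma>_def)
    show "\<forall>c\<in>set \<Gamma>. wf_node k (set (atts T)) c" using full_wf[OF order_refl k] by (simp add: \<Gamma>_def)
    show "\<Union> {sub_rows T p |p d. tree_path \<Gamma> p d} = set (map fst (rows T))"
    proof
      show "\<Union> {sub_rows T p |p d. tree_path \<Gamma> p d} \<subseteq> set (map fst (rows T))"
        unfolding sub_rows_def by blast
    next
      show "set (map fst (rows T)) \<subseteq> \<Union> {sub_rows T p |p d. tree_path \<Gamma> p d}"
      proof
        fix r assume "r \<in> set (map fst (rows T))"
        then obtain D where rD: "(r, D) \<in> set (rows T)" by auto
        have "tree_path \<Gamma> (zip (atts T) r) (L r)" using tp rowsT[OF rD] by blast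
        then show "r \<in> \<Union> {sub_rows T p |p d. tree_path \<Gamma> p d}" using cov[OF rD] by blast
      qed
    qed
    show "\<forall>(r, D)\<in>set (rows T). \<forall>p d. tree_path \<Gamma> p d \<and> r \<in> sub_rows T p \<longrightarrow> d \<in> D"
    proof (intro ballI allI impI, clarify)
      fix r D p d assume rD: "(r, D) \<in> set (rows T)" and tpp: "tree_path \<Gamma> p d" and s: "r \<in> sub_rows T p"
      obtain w where w: "length w = n" "p = zip (atts T) w" "d = L w" using tpp tp by blast
      have "r = w" using bk[OF rD w(1)] s w(2) by blast
      then show "d \<in> D" using LD[OF rD] w by simp
    qed
  qed
  have dt: "dtree_for k T \<Gamma>" unfolding dtree_for_def using nd full_det by (simp add: \<Gamma>_def)
  have "{\<psi> (map fst p) |p d. tree_path \<Gamma> p d} = {\<psi> (atts T)}"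
  proof
    show "{\<psi> (map fst p) |p d. tree_path \<Gamma> p d} \<subseteq> {\<psi> (atts T)}"
      using tp unfolding n_def by auto
  next
    have "tree_path \<Gamma> (zip (atts T) (replicate n 0)) (L (replicate n 0))"
      unfolding tp using k by (intro exI[of _ "replicate n 0"]) auto
    moreover have "map fst (zip (atts T) (replicate n 0)) = atts T" unfolding n_def by simp
    ultimately have "\<psi> (atts T) \<in> {\<psi> (map fst p) |p d. tree_path \<Gamma> p d}"
      unfolding mem_Collect_eq by metis
    then show "{\<psi> (atts T)} \<subseteq> {\<psi> (map fst p) |p d. tree_path \<Gamma> p d}" by simp
  qed
  then have "tree_cplx \<psi> \<Gamma> = \<psi> (atts T)" unfolding tree_cplx_def by simp
  then show ?thesis using dt by blast
qed


lemma d_le_i: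
  assumes "table_in k T" "k \<ge> 1"
  shows "psi_of k \<psi> CD T \<le> psi_of k \<psi> CI T"
proof -
  obtain \<Gamma> where "dtree_for k T \<Gamma> \<and> tree_cplx \<psi> \<Gamma> = \<psi> (atts T)" using full_tree[OF assms] by blast
  then show ?thesis unfolding psi_of_def by (auto intro: Least_le)
qed

lemma a_le_d:
  assumes "table_in k T" "k \<ge> 1"
  shows "psi_of k \<psi> CA T \<le> psi_of k \<psi> CD T"
proof -
  obtain \<Gamma> where "dtree_for k T \<Gamma> \<and> tree_cplx \<psi> \<Gamma> = \<psi> (atts T)" using full_tree[OF assms] by blast
  then have "\<exists>n \<Gamma>. dtree_for k T \<Gamma> \<and> tree_cplx \<psi> \<Gamma> = n" by blast
  then obtain \<Gamma>' where G: "dtree_for k T \<Gamma>'"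
     "tree_cplx \<psi> \<Gamma>' = (LEAST n. \<exists>\<Gamma>. dtree_for k T \<Gamma> \<and> tree_cplx \<psi> \<Gamma> = n)"
    using LeastI_ex[of "\<lambda>n. \<exists>\<Gamma>. dtree_for k T \<Gamma> \<and> tree_cplx \<psi> \<Gamma> = n"] by blast
  then have "ndtree_for k T \<Gamma>'" unfolding dtree_for_def by blast
  then show ?thesis unfolding psi_of_def using G by (auto intro: Least_le)
qed

theorem lemma3:
  fixes k :: nat and C :: "'f dtable set" and \<psi> :: "'f list \<Rightarrow> nat" and b :: cmode
  assumes "k \<ge> 2" and "closed_class k C"
  shows "ftyp (U_fun k C \<psi> b CI) \<preceq>\<^sub>t ftyp (U_fun k C \<psi> b CD)
       \<and> ftyp (U_fun k C \<psi> b CD) \<preceq>\<^sub>t ftyp (U_fun k C \<psi> b CA)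
       \<and> ftyp (U_fun k C \<psi> CA b) \<preceq>\<^sub>t ftyp (U_fun k C \<psi> CD b)
       \<and> ftyp (U_fun k C \<psi> CD b) \<preceq>\<^sub>t ftyp (U_fun k C \<psi> CI b)"
proof -
  have k: "k \<ge> 1" using assms(1) by simp
  have tin: "\<forall>T\<in>C. table_in k T" using assms(2) unfolding closed_class_def by blast
  have di: "\<forall>T\<in>C. psi_of k \<psi> CD T \<le> psi_of k \<psi> CI T" using tin d_le_i k by blast
  have ad: "\<forall>T\<in>C. psi_of k \<psi> CA T \<le> psi_of k \<psi> CD T" using tin a_le_d k by blast
  show ?thesis unfolding U_fun_GU
    using GU_c[OF di] GU_c[OF ad] GU_b[OF ad] GU_b[OF di] by blast
qed

end
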